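(* There exist two infinite bit sequences $\{I_n^0\}_{n=0}^\infty\in\{0,1\}^\omega$ and $\{I_n^1\}_{n=0}^\infty\in\{0,1\}^\omega$ such that for every $Q\in\mathbb{N}$ there exist $t\in\mathbb{N}$ and two $Q$-indistinguishable binary words $x=x_0\ldots x_{t-1}$ and $y=y_0\ldots y_{t-1}$ of length $t$ with \[I_0^{x_0}\oplus\cdots\oplus I_{t-1}^{x_{t-1}}\neq I_0^{y_0}\oplus\cdots\oplus I_{t-1}^{y_{t-1}},\] where $\oplus$ denotes XOR.
   Context: Two binary words $x,y\in\{0,1\}^*$ are $Q$-indistinguishable if there is no deterministic finite automaton over the alphabet $\{0,1\}$ with at most $Q$ states which reaches different states after reading $x$ and after reading $y$ (from its initial state). *)

theory Defs
  imports Main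
begin

text \<open>A DFA over the alphabet {0,1} (bits encoded as bool, False = 0, True = 1)
  with state set {0..<n}: an initial state and a transition function
  that maps the state set into itself.\<close>
definition is_dfa :: "nat \<Rightarrow> nat \<Rightarrow> (nat \<Rightarrow> bool \<Rightarrow> nat) \<Rightarrow> bool" where
  "is_dfa n q0 \<delta> \<longleftrightarrow> q0 < n \<and> (\<forall>q<n. \<forall>b. \<delta> q b < n)"

definition run :: "(nat \<Rightarrow> bool \<Rightarrow> nat) \<Rightarrow> nat \<Rightarrow> bool list \<Rightarrow> nat" where
  "run \<delta> q w = foldl \<delta> q w"

definition Q_indist :: "nat \<Rightarrow> bool list \<Rightarrow> bool list \<Rightarrow> bool" where
  "Q_indist Q x y \<longleftrightarrow>
     \<not> (\<exists>n q0 \<delta>. n \<le> Q \<and> is_dfa n q0 \<delta> \<and> run \<delta> q0 x \<noteq> run \<delta> q0 y)"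

definition xor_sel :: "(nat \<Rightarrow> bool) \<Rightarrow> (nat \<Rightarrow> bool) \<Rightarrow> bool list \<Rightarrow> bool" where
  "xor_sel I0 I1 x = foldr (\<noteq>) (map (\<lambda>i. if x ! i then I1 i else I0 i) [0..<length x]) False"

end

theory Submission
  imports Defs
begin

lemma orbit_rep:
  assumes f: "\<forall>q<n. f q < (n::nat)" and q: "q < n"
  shows "\<exists>i j. i < j \<and> j \<le> n \<and> (f^^i) q = (f^^j) q"
proof -
  have lt: "(f^^i) q < n" for i
    by (induction i) (auto simp: q f)
  have sub: "(\<lambda>i. (f^^i) q) ` {0..n} \<subseteq> {0..<n}" using lt by auto
  have "\<not> inj_on (\<lambda>i. (f^^i) q) {0..n}"
  proof
    assume "inj_on (\<lambda>i. (f^^i) q) {0..n}"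
    from card_inj_on_le[OF this sub] show False by simp
  qed
  then obtain i j where ij: "i \<in> {0..n}" "j \<in> {0..n}" "i \<noteq> j" "(f^^i) q = (f^^j) q"
    unfolding inj_on_def by blast
  show ?thesis
  proof (cases "i < j")
    case True then show ?thesis using ij by auto
  next
    case False then have "j < i" using ij(3) by simp
    moreover have "i \<le> n" using ij by simp
    ultimately show ?thesis using ij(4) by metis
  qed
qed

lemma period_step:
  fixes f :: "'a \<Rightarrow> 'a"
  assumes "(f^^i) q = (f^^j) q" "i < j" "i \<le> m"
  shows "(f^^(m + (j - i))) q = (f^^m) q"
proof -
  have e1: "m + (j - i) = (m - i) + j" using assms by simp
  have e2: "m = (m - i) + i" using assms by simp
  have "(f^^(m + (j - i))) q = (f^^(m - i)) ((f^^j) q)"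
    by (simp only: e1 funpow_add o_apply)
  also have "\<dots> = (f^^(m - i)) ((f^^i) q)" using assms by simp
  also have "\<dots> = (f^^((m - i) + i)) q" by (simp only: funpow_add o_apply)
  also have "\<dots> = (f^^m) q" using e2 by simp
  finally show ?thesis .
qed

lemma period_mult:
  fixes f :: "'a \<Rightarrow> 'a"
  assumes "(f^^i) q = (f^^j) q" "i < j" "i \<le> m"
  shows "(f^^(m + k * (j - i))) q = (f^^m) q"
proof (induction k)
  case 0 then show ?case by simp
next
  case (Suc k)
  have e: "m + Suc k * (j - i) = (m + k * (j - i)) + (j - i)" by simp
  have "(f^^(m + Suc k * (j - i))) q = (f^^((m + k * (j - i)) + (j - i))) q"
    by (simp only: e)
  also have "\<dots> = (f^^(m + k * (j - i))) q"
    using period_step[OF assms(1,2)] assms(3) by simp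
  finally show ?case using Suc by simp
qed

lemma key:
  assumes f: "\<forall>q<n. f q < (n::nat)" and q: "q < n" and nQ: "n \<le> Q"
  shows "(f^^(2 * fact (Q+2))) q = (f^^(fact (Q+2))) q"
proof -
  define K :: nat where "K = fact (Q+2)"
  obtain i j where ij: "i < j" "j \<le> n" "(f^^i) q = (f^^j) q"
    using orbit_rep[OF f q] by blast
  have "j - i dvd K" unfolding K_def
    using ij nQ by (intro dvd_fact) auto
  then obtain c where c: "K = (j - i) * c" by (auto elim: dvdE)
  have "Q + 2 \<le> K" unfolding K_def by (rule fact_ge_self)
  hence "i \<le> K" using ij nQ by simp
  from period_mult[OF ij(3) ij(1) this, of c]
  have "(f^^(K + c * (j - i))) q = (f^^K) q" .
  moreover have "K + c * (j - i) = 2 * K" using c by simp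
  ultimately show ?thesis unfolding K_def by simp
qed

lemma foldl_rep: "foldl d q (replicate n b) = ((\<lambda>s. d s b)^^n) q"
proof (induction n arbitrary: q)
  case 0 then show ?case by simp
next
  case (Suc n)
  have "((\<lambda>s. d s b)^^n) ((\<lambda>s. d s b) q) = (\<lambda>s. d s b) (((\<lambda>s. d s b)^^n) q)"
    by (rule funpow_swap1[symmetric])
  then show ?case using Suc by simp
qed

lemma foldr_neq: "foldr (\<noteq>) bs False = odd (length (filter id bs))"
  by (induction bs) auto

lemma xor_sel_eq:
  "xor_sel (\<lambda>_. False) I1 (replicate a False @ replicate b True)
    = odd (card {i. a \<le> i \<and> i < a + b \<and> I1 i})"
proof -
  let ?x = "replicate a False @ replicate b True"
  have "xor_sel (\<lambda>_. False) I1 ?x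
     = odd (length (filter (\<lambda>i. if ?x ! i then I1 i else False) [0..<a+b]))"
    unfolding xor_sel_def foldr_neq by (simp add: filter_map comp_def)
  also have "filter (\<lambda>i. if ?x ! i then I1 i else False) [0..<a+b]
      = filter (\<lambda>i. a \<le> i \<and> I1 i) [0..<a+b]"
    by (rule filter_cong) (auto simp: nth_append)
  also have "length \<dots> = card {i. a \<le> i \<and> i < a + b \<and> I1 i}"
    by (subst distinct_card[symmetric]) (auto intro: arg_cong[where f=card])
  finally show ?thesis .
qed

theorem lemma1:
  shows "\<exists>I0 I1 :: nat \<Rightarrow> bool. \<forall>Q :: nat. \<exists>t :: nat. \<exists>x y :: bool list.
            length x = t \<and> length y = t \<and> Q_indist Q x y \<and>
            xor_sel I0 I1 x \<noteq> xor_sel I0 I1 y"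
proof (intro exI allI)
  fix Q :: nat
  define I1 :: "nat \<Rightarrow> bool" where "I1 = (\<lambda>i. i \<in> range fact)"
  define K :: nat where "K = fact (Q+2)"
  define x where "x = replicate K False @ replicate (2*K) True"
  define y where "y = replicate (2*K) False @ replicate K True"
  have ind: "Q_indist Q x y"
    unfolding Q_indist_def
  proof clarify
    fix n q0 \<delta>
    assume n: "n \<le> Q" and d: "is_dfa n q0 \<delta>" and ne: "run \<delta> q0 x \<noteq> run \<delta> q0 y"
    have f0: "\<forall>q<n. \<delta> q False < n" and f1: "\<forall>q<n. \<delta> q True < n" and q0: "q0 < n"
      using d unfolding is_dfa_def by auto
    let ?s = "((\<lambda>s. \<delta> s False)^^K) q0"
    have lt: "((\<lambda>s. \<delta> s False)^^m) q0 < n" for m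
      by (induction m) (auto simp: q0 f0)
    have "run \<delta> q0 x = ((\<lambda>s. \<delta> s True)^^(2*K)) ?s"
      unfolding run_def x_def by (simp add: foldl_rep)
    also have "\<dots> = ((\<lambda>s. \<delta> s True)^^K) ?s"
      unfolding K_def using key[OF f1 lt n] K_def by simp
    also have "?s = ((\<lambda>s. \<delta> s False)^^(2*K)) q0"
      unfolding K_def using key[OF f0 q0 n] by simp
    also have "((\<lambda>s. \<delta> s True)^^K) \<dots> = run \<delta> q0 y"
      unfolding run_def y_def by (simp add: foldl_rep)
    finally show False using ne by simp
  qed
  have K2: "fact (Q+1) < K" unfolding K_def by simp
  have K3: "3 * K \<le> fact (Q+3)"
  proof -
    have "fact (Suc (Q+2)) = Suc (Q+2) * (fact (Q+2) :: nat)" by (simp only: fact_Suc of_nat_id)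
    moreover have "3 * K \<le> Suc (Q+2) * K" by (intro mult_le_mono1) simp
    ultimately show ?thesis unfolding K_def by (simp add: numeral_3_eq_3)
  qed
  have facts: "fact m \<in> {K..<3*K} \<longleftrightarrow> m = Q + 2" for m :: nat
  proof
    assume a: "fact m \<in> {K..<3*K}"
    show "m = Q + 2"
    proof (rule ccontr)
      assume "m \<noteq> Q + 2"
      hence "m \<le> Q + 1 \<or> Q + 3 \<le> m" by auto
      thus False
      proof
        assume "m \<le> Q + 1"
        hence "fact m \<le> (fact (Q+1) :: nat)" by (rule fact_mono)
        thus False using a K2 by simp
      next
        assume "Q + 3 \<le> m"
        hence "fact (Q+3) \<le> (fact m :: nat)" by (rule fact_mono)
        thus False using a K3 by simp
      qed
    qed
  next
    assume "m = Q + 2" thus "fact m \<in> {K..<3*K}" unfolding K_def by simp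
  qed
  have Kpos: "0 < K" unfolding K_def by simp
  have Kr: "I1 K" unfolding I1_def K_def by (rule rangeI)
  have s1: "{i. K \<le> i \<and> i < 3*K \<and> I1 i} = {K}"
  proof (rule set_eqI, rule iffI)
    fix i assume "i \<in> {i. K \<le> i \<and> i < 3*K \<and> I1 i}"
    then obtain m where m: "i = fact m" "K \<le> i" "i < 3*K" unfolding I1_def by auto
    then have "fact m \<in> {K..<3*K}" by simp
    then have "m = Q + 2" using facts by blast
    then show "i \<in> {K}" using m K_def by simp
  next
    fix i assume "i \<in> {K}"
    then show "i \<in> {i. K \<le> i \<and> i < 3*K \<and> I1 i}" using Kpos Kr by simp
  qed
  have s2: "{i. 2*K \<le> i \<and> i < 3*K \<and> I1 i} = {}"
  proof (rule set_eqI, rule iffI)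
    fix i assume "i \<in> {i. 2*K \<le> i \<and> i < 3*K \<and> I1 i}"
    then obtain m where m: "i = fact m" "2*K \<le> i" "i < 3*K" unfolding I1_def by auto
    then have "fact m \<in> {K..<3*K}" by simp
    then have "m = Q + 2" using facts by blast
    then show "i \<in> {}" using m K_def Kpos by simp
  qed simp
  show "length x = 3*K \<and> length y = 3*K \<and> Q_indist Q x y \<and>
        xor_sel (\<lambda>_. False) I1 x \<noteq> xor_sel (\<lambda>_. False) I1 y"
  proof (intro conjI)
    show "length x = 3*K" unfolding x_def by simp
    show "length y = 3*K" unfolding y_def by simp
    show "Q_indist Q x y" by (rule ind)
    have e1: "K + 2*K = 3*K" and e2: "2*K + K = 3*K" by simp_all
    have "xor_sel (\<lambda>_. False) I1 x = odd (card {i. K \<le> i \<and> i < 3*K \<and> I1 i})"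
      unfolding x_def xor_sel_eq e1 ..
    also have "\<dots> = True" by (simp only: s1 card_1_singleton_iff) simp
    finally have X: "xor_sel (\<lambda>_. False) I1 x" by simp
    have "xor_sel (\<lambda>_. False) I1 y = odd (card {i. 2*K \<le> i \<and> i < 3*K \<and> I1 i})"
      unfolding y_def xor_sel_eq e2 ..
    also have "\<dots> = False" by (simp only: s2) simp
    finally have Y: "\<not> xor_sel (\<lambda>_. False) I1 y" by simp
    show "xor_sel (\<lambda>_. False) I1 x \<noteq> xor_sel (\<lambda>_. False) I1 y" using X Y by simp
  qed
qed

end
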